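(* Let $m\in\mathbb{N}$. Then there is a bijection between the $m+m$ non-inclusive sum-and-distance systems and the $2m\times 2m$ principal reversible squares, and there is a bijection between the $m+m$ inclusive sum-and-distance systems and the $(2m+1)\times(2m+1)$ principal reversible squares.
   Context: Let $m\in\mathbb{N}$ and positive integers $a_1<\dots<a_m$, $b_1<\dots<b_m$. The pair $\{\{a_1,\dots,a_m\},\{b_1,\dots,b_m\}\}$ is an $m+m$ non-inclusive sum-and-distance system if $\{a_j+b_k,\ |a_j-b_k| : j,k\in\{1,\dots,m\}\}=\{1,3,5,\dots,4m^2-1\}$, and an $m+m$ inclusive sum-and-distance system if $\{a_j,\ b_k,\ a_j+b_k,\ |a_j-b_k| : j,k\in\{1,\dots,m\}\}=\{1,2,\dots,2m(m+1)\}$. For $n\in\mathbb{N}$, a reversible square matrix is a real matrix $M=(M_{i,j})$ with indices $i,j\in\mathbb{Z}_n=\mathbb{Z}/n\mathbb{Z}$ (top-left entry index $(1,1)$, indices computed modulo $n$) such that (R) $M_{i,j}+M_{i,n+1-j}=M_{i,k}+M_{i,n+1-k}$ and $M_{i,j}+M_{n+1-i,j}=M_{k,j}+M_{n+1-k,j}$ for all $i,j,k$, and (V) $M_{i,j}+M_{k,l}=M_{i,l}+M_{k,j}$ for all $i,j,k,l$. An $n\times n$ principal reversible square is a reversible square matrix whose set of entries is exactly $\{1,\dots,n^2\}$, whose entries increase along each row and each column, and with $M_{1,1}=1$, $M_{1,2}=2$. *)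

theory Defs
  imports Complex_Main
begin

definition non_incl_sds :: "nat \<Rightarrow> int set set \<Rightarrow> bool" where
  "non_incl_sds m S \<longleftrightarrow>
     (\<exists>A B. S = {A, B} \<and> finite A \<and> finite B \<and> card A = m \<and> card B = m \<and>
        (\<forall>a\<in>A. a > 0) \<and> (\<forall>b\<in>B. b > 0) \<and>
        {a + b | a b. a \<in> A \<and> b \<in> B} \<union> {\<bar>a - b\<bar> | a b. a \<in> A \<and> b \<in> B}
          = {k. odd k \<and> 1 \<le> k \<and> k \<le> 4 * int m ^ 2 - 1})"

definition incl_sds :: "nat \<Rightarrow> int set set \<Rightarrow> bool" where
  "incl_sds m S \<longleftrightarrow>
     (\<exists>A B. S = {A, B} \<and> finite A \<and> finite B \<and> card A = m \<and> card B = m \<and>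
        (\<forall>a\<in>A. a > 0) \<and> (\<forall>b\<in>B. b > 0) \<and>
        A \<union> B \<union> {a + b | a b. a \<in> A \<and> b \<in> B} \<union> {\<bar>a - b\<bar> | a b. a \<in> A \<and> b \<in> B}
          = {1 .. 2 * int m * (int m + 1)})"

text \<open>n x n real matrices are functions nat => nat => real; the relevant entries
  are those with indices in {1..n} (index n+1-j stays in {1..n}, so no reduction
  mod n is needed).\<close>

definition reversible_square :: "nat \<Rightarrow> (nat \<Rightarrow> nat \<Rightarrow> real) \<Rightarrow> bool" where
  "reversible_square n M \<longleftrightarrow>
     (\<forall>i\<in>{1..n}. \<forall>j\<in>{1..n}. \<forall>k\<in>{1..n}.
        M i j + M i (n + 1 - j) = M i k + M i (n + 1 - k) \<and>
        M i j + M (n + 1 - i) j = M k j + M (n + 1 - k) j) \<and>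
     (\<forall>i\<in>{1..n}. \<forall>j\<in>{1..n}. \<forall>k\<in>{1..n}. \<forall>l\<in>{1..n}.
        M i j + M k l = M i l + M k j)"

text \<open>Principal reversible square; to make matrices canonical objects, entries
  outside {1..n} x {1..n} are required to be 0.\<close>

definition principal_reversible_square :: "nat \<Rightarrow> (nat \<Rightarrow> nat \<Rightarrow> real) \<Rightarrow> bool" where
  "principal_reversible_square n M \<longleftrightarrow>
     reversible_square n M \<and>
     (\<forall>i j. (i \<notin> {1..n} \<or> j \<notin> {1..n}) \<longrightarrow> M i j = 0) \<and>
     {M i j | i j. i \<in> {1..n} \<and> j \<in> {1..n}} = real ` {1 .. n ^ 2} \<and>
     (\<forall>i\<in>{1..n}. \<forall>j. 1 \<le> j \<and> j < n \<longrightarrow> M i j < M i (j + 1)) \<and>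
     (\<forall>j\<in>{1..n}. \<forall>i. 1 \<le> i \<and> i < n \<longrightarrow> M i j < M (i + 1) j) \<and>
     M 1 1 = 1 \<and> M 1 2 = 2"

end

theory Submission
  imports Defs
begin

definition strict_on :: "nat \<Rightarrow> (nat \<Rightarrow> 'a::linorder) \<Rightarrow> bool" where
  "strict_on n x \<longleftrightarrow> (\<forall>i. 1 \<le> i \<and> i < n \<longrightarrow> x i < x (i+1))"

lemma strict_on_less:
  assumes "strict_on n x" "1 \<le> i" "i < j" "j \<le> n"
  shows "x i < x j"
  using assms(3,4)
proof (induction j)
  case 0 then show ?case by simp
next
  case (Suc k)
  have "x k < x (k+1)" using assms(1,2) Suc by (auto simp: strict_on_def)
  then show ?case using Suc by (auto simp: less_Suc_eq)
qed

lemma strict_on_le: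
  assumes "strict_on n x" "1 \<le> i" "i \<le> j" "j \<le> n"
  shows "x i \<le> x j"
  using strict_on_less[OF assms(1,2) _ assms(4), of] assms(3) by (cases "i = j") force+

lemma strict_on_inj:
  assumes "strict_on n x" "m \<le> n"
  shows "inj_on x {1..m}"
proof (rule inj_onI)
  fix i j assume "i \<in> {1..m}" "j \<in> {1..m}" "x i = x j"
  then show "i = j" using strict_on_less[OF assms(1), of i j] strict_on_less[OF assms(1), of j i] assms(2)
    by (cases i j rule: linorder_cases) auto
qed

lemma sorted_image:
  assumes "strict_on m f"
  shows "sorted_list_of_set (f ` {1..m}) = map f [1..<m+1]"
proof -
  have sw: "sorted_wrt (<) (map f [1..<m+1])"
    unfolding sorted_wrt_iff_nth_less using strict_on_less[OF assms] by (auto simp del: upt_Suc)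
  have "set (map f [1..<m+1]) = f ` {1..m}" by auto
  then show ?thesis using sw
    by (metis sorted_list_of_set.idem_if_sorted_distinct strict_sorted_iff)
qed

lemma strict_image_unique:
  assumes "strict_on m f" "strict_on m g" "f ` {1..m} = g ` {1..m}" "k \<in> {1..m}"
  shows "f k = g k"
proof -
  have "map f [1..<m+1] = map g [1..<m+1]" using sorted_image[OF assms(1)] sorted_image[OF assms(2)] assms(3) by metis
  then have "map f [1..<m+1] ! (k-1) = map g [1..<m+1] ! (k-1)" by (simp only:)
  moreover have kk: "k - 1 < length [1..<m+1]" using assms(4) by (simp del: upt_Suc; linarith)
  moreover have u: "[1..<m+1] ! (k-1) = k" using assms(4) by (subst nth_upt) auto
  ultimately show ?thesis using nth_map[OF kk, of f] nth_map[OF kk, of g] u by simp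
qed


definition sa :: "int set \<Rightarrow> nat \<Rightarrow> int" where
  "sa A k = sorted_list_of_set A ! (k - 1)"

lemma sa_props:
  assumes "finite A" "card A = m"
  shows "strict_on m (sa A)" "sa A ` {1..m} = A"
proof -
  let ?L = "sorted_list_of_set A"
  have len: "length ?L = m" using assms by simp
  have sw: "sorted_wrt (<) ?L" by simp
  show "strict_on m (sa A)" unfolding strict_on_def sa_def
  proof (intro allI impI)
    fix i assume "1 \<le> i \<and> i < m"
    then show "?L ! (i-1) < ?L ! (i+1-1)" using sw len unfolding sorted_wrt_iff_nth_less by auto
  qed
  have "A = set ?L" using assms by simp
  also have "\<dots> = (\<lambda>k. ?L ! k) ` {..<m}" using len by (auto simp: in_set_conv_nth)
  also have "\<dots> = sa A ` {1..m}"
  proof -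
    have "{..<m} = (\<lambda>k. k - 1) ` {1..m}"
      by (auto simp: image_iff intro!: bexI[where x="Suc _"])
    then show ?thesis by (simp add: image_image sa_def)
  qed
  finally show "sa A ` {1..m} = A" by simp
qed

definition antisym_on :: "nat \<Rightarrow> (nat \<Rightarrow> int) \<Rightarrow> bool" where
  "antisym_on n x \<longleftrightarrow> (\<forall>i\<in>{1..n}. x (n+1-i) = - x i)"

definition xs :: "nat \<Rightarrow> nat \<Rightarrow> int set \<Rightarrow> nat \<Rightarrow> int" where
  "xs n m A i = (if i \<le> m then - sa A (m+1-i) else if n - m < i then sa A (i - (n-m)) else 0)"

lemma xs_props:
  assumes nm: "n = 2*m \<or> n = 2*m+1" and A: "finite A" "card A = m" "\<forall>a\<in>A. a > 0"
  shows "antisym_on n (xs n m A)" "strict_on n (xs n m A)" "uminus ` xs n m A ` {1..m} = A"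
proof -
  have st: "strict_on m (sa A)" and im: "sa A ` {1..m} = A" using sa_props[OF A(1,2)] by auto
  have pos: "sa A k > 0" if "k \<in> {1..m}" for k using im A(3) that by blast
  have lt: "sa A i < sa A j" if "1 \<le> i" "i < j" "j \<le> m" for i j
    using strict_on_less[OF st that] .
  show "antisym_on n (xs n m A)" unfolding antisym_on_def
  proof
    fix i assume i: "i \<in> {1..n}"
    consider "i \<le> m" | "n - m < i" | "n = 2*m+1" "i = m+1" using nm i by fastforce
    then show "xs n m A (n + 1 - i) = - xs n m A i"
    proof cases
      case 1
      then have "\<not> n + 1 - i \<le> m" "n - m < n + 1 - i" "n + 1 - i - (n - m) = m + 1 - i" using nm i by auto
      then show ?thesis using 1 by (simp add: xs_def)
    next
      case 2
      then have "n + 1 - i \<le> m" "m + 1 - (n + 1 - i) = i - (n - m)" "\<not> i \<le> m" using nm i by auto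
      then show ?thesis using 2 by (simp add: xs_def)
    next
      case 3
      then show ?thesis by (simp add: xs_def)
    qed
  qed
  show "strict_on n (xs n m A)" unfolding strict_on_def
  proof (intro allI impI)
    fix i assume i: "1 \<le> i \<and> i < n"
    consider "i + 1 \<le> m" | "i = m" "n = 2*m" | "i = m" "n = 2*m+1" | "i = m+1" "n = 2*m+1" | "n - m < i"
      using nm i by linarith
    then show "xs n m A i < xs n m A (i + 1)"
    proof cases
      case 1
      have "sa A (m - i) < sa A (m + 1 - i)" using 1 i by (intro lt) auto
      then show ?thesis using 1 by (simp add: xs_def)
    next
      case 2
      then show ?thesis using pos[of 1] i by (simp add: xs_def)
    next
      case 3
      then show ?thesis using pos[of 1] i by (simp add: xs_def)
    next
      case 4
      then show ?thesis using pos[of 1] i by (simp add: xs_def)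
    next
      case 5
      have "sa A (i - (n-m)) < sa A (i + 1 - (n-m))" using 5 i nm by (intro lt) auto
      then show ?thesis using 5 nm by (auto simp add: xs_def)
    qed
  qed
  have "uminus ` xs n m A ` {1..m} = (\<lambda>i. sa A (m+1-i)) ` {1..m}"
    by (auto simp: xs_def image_image)
  also have "\<dots> = sa A ` ((\<lambda>i. m+1-i) ` {1..m})" by (simp add: image_image)
  also have "(\<lambda>i. m+1-i) ` {1..m} = {1..m}"
  proof
    show "(\<lambda>i. m+1-i) ` {1..m} \<subseteq> {1..m}" by auto
    show "{1..m} \<subseteq> (\<lambda>i. m+1-i) ` {1..m}"
    proof
      fix k assume "k \<in> {1..m}"
      then show "k \<in> (\<lambda>i. m+1-i) ` {1..m}" by (intro image_eqI[of _ _ "m+1-k"]) auto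
    qed
  qed
  finally show "uminus ` xs n m A ` {1..m} = A" using im by simp
qed

definition PM :: "int set \<Rightarrow> int set" where
  "PM X = X \<union> uminus ` X"

lemma antisym_mid:
  assumes "antisym_on n x" "n = 2*m+1"
  shows "x (m+1) = 0"
proof -
  have "m+1 \<in> {1..n}" "n+1-(m+1) = m+1" using assms(2) by auto
  then have "x (m+1) = - x (m+1)" using assms(1) unfolding antisym_on_def by metis
  then show ?thesis by simp
qed

lemma antisym_image:
  assumes "antisym_on n x" "n = 2*m \<or> n = 2*m+1"
  shows "x ` {1..n} = PM (uminus ` x ` {1..m}) \<union> (if n = 2*m then {} else {0})"
proof
  show "x ` {1..n} \<subseteq> PM (uminus ` x ` {1..m}) \<union> (if n = 2*m then {} else {0})"
  proof
    fix v assume "v \<in> x ` {1..n}"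
    then obtain i where i: "i \<in> {1..n}" "v = x i" by auto
    consider "i \<le> m" | "n - m < i" | "n = 2*m+1" "i = m+1" using assms(2) i by fastforce
    then show "v \<in> PM (uminus ` x ` {1..m}) \<union> (if n = 2*m then {} else {0})"
    proof cases
      case 1 then show ?thesis using i by (auto simp: PM_def image_image)
    next
      case 2
      have j: "n+1-i \<in> {1..n}" using i by auto
      have "x (n+1-(n+1-i)) = - x (n+1-i)" using assms(1) j unfolding antisym_on_def by blast
      moreover have "n+1-(n+1-i) = i" using i by auto
      ultimately have "x i = - x (n+1-i)" by simp
      moreover have "n+1-i \<in> {1..m}" using 2 i by auto
      ultimately show ?thesis using i unfolding PM_def by (auto simp: image_image)
    next
      case 3
      then have "x (m+1) = 0" using antisym_mid assms(1) by blast
      then show ?thesis using 3 i by auto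
    qed
  qed
  show "PM (uminus ` x ` {1..m}) \<union> (if n = 2*m then {} else {0}) \<subseteq> x ` {1..n}"
  proof
    fix v assume v: "v \<in> PM (uminus ` x ` {1..m}) \<union> (if n = 2*m then {} else {0})"
    consider "v \<in> x ` {1..m}" | "v \<in> uminus ` x ` {1..m}" | "n = 2*m+1" "v = 0"
      using v assms(2) unfolding PM_def by (auto simp: image_image split: if_splits)
    then show "v \<in> x ` {1..n}"
    proof cases
      case 1 then show ?thesis using assms(2) by auto
    next
      case 2
      then obtain i where i: "i \<in> {1..m}" "v = - x i" by auto
      then have "x (n+1-i) = v" using assms unfolding antisym_on_def by auto
      moreover have "n+1-i \<in> {1..n}" using i assms(2) by auto
      ultimately show ?thesis by force
    next
      case 3
      then have "x (m+1) = 0" using antisym_mid assms(1) by blast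
      moreover have "m+1 \<in> {1..n}" using 3 by auto
      ultimately show ?thesis using 3 by force
    qed
  qed
qed

definition mat :: "nat \<Rightarrow> real \<Rightarrow> real \<Rightarrow> (nat \<Rightarrow> int) \<Rightarrow> (nat \<Rightarrow> int) \<Rightarrow> nat \<Rightarrow> nat \<Rightarrow> real" where
  "mat n c s x y i j = (if i \<in> {1..n} \<and> j \<in> {1..n} then c + s * (of_int (x i) + of_int (y j)) else 0)"

definition sumset :: "int set \<Rightarrow> int set \<Rightarrow> int set" where
  "sumset X Y = {u + v | u v. u \<in> X \<and> v \<in> Y}"

definition entries :: "nat \<Rightarrow> (nat \<Rightarrow> nat \<Rightarrow> real) \<Rightarrow> real set" where
  "entries n M = {M i j | i j. i \<in> {1..n} \<and> j \<in> {1..n}}"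

lemma mat_rev:
  assumes "antisym_on n x" "antisym_on n y"
  shows "reversible_square n (mat n c s x y)"
proof -
  have ax: "x (n+1-i) = - x i" if "i \<in> {1..n}" for i using assms(1) that unfolding antisym_on_def by blast
  have ay: "y (n+1-i) = - y i" if "i \<in> {1..n}" for i using assms(2) that unfolding antisym_on_def by blast
  have r: "n + 1 - i \<in> {1..n}" if "i \<in> {1..n}" for i using that by auto
  show ?thesis unfolding reversible_square_def
  proof (intro conjI ballI)
    fix i j k assume i: "i \<in> {1..n}" and j: "j \<in> {1..n}" and k: "k \<in> {1..n}"
    show "mat n c s x y i j + mat n c s x y i (n + 1 - j) = mat n c s x y i k + mat n c s x y i (n + 1 - k)"
      using i j k r[OF j] r[OF k] ay[OF j] ay[OF k] unfolding mat_def by (simp add: algebra_simps)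
    show "mat n c s x y i j + mat n c s x y (n + 1 - i) j = mat n c s x y k j + mat n c s x y (n + 1 - k) j"
      using i j k r[OF i] r[OF k] ax[OF i] ax[OF k] unfolding mat_def by (simp add: algebra_simps)
  next
    fix i j k l assume "i \<in> {1..n}" "j \<in> {1..n}" "k \<in> {1..n}" "l \<in> {1..n}"
    then show "mat n c s x y i j + mat n c s x y k l = mat n c s x y i l + mat n c s x y k j"
      unfolding mat_def by (simp add: algebra_simps)
  qed
qed

lemma mat_zero: "i \<notin> {1..n} \<or> j \<notin> {1..n} \<Longrightarrow> mat n c s x y i j = 0"
  unfolding mat_def by auto

lemma mat_entries:
  "entries n (mat n c s x y) = (\<lambda>w. c + s * of_int w) ` sumset (x ` {1..n}) (y ` {1..n})"
  unfolding entries_def sumset_def mat_def by (auto simp: image_iff) force+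

lemma mat_incr:
  assumes "s > 0" "strict_on n x" "strict_on n y"
  shows "\<forall>i\<in>{1..n}. \<forall>j. 1 \<le> j \<and> j < n \<longrightarrow> mat n c s x y i j < mat n c s x y i (j + 1)"
        "\<forall>j\<in>{1..n}. \<forall>i. 1 \<le> i \<and> i < n \<longrightarrow> mat n c s x y i j < mat n c s x y (i + 1) j"
  using assms unfolding mat_def strict_on_def by auto

lemma mat_transpose: "mat n c s x y i j = mat n c s y x j i"
  unfolding mat_def by (auto simp: algebra_simps)

lemma mat_cong:
  assumes "\<forall>i\<in>{1..n}. x i = x' i" "\<forall>i\<in>{1..n}. y i = y' i"
  shows "mat n c s x y = mat n c s x' y'"
  using assms unfolding mat_def by (intro ext) auto

lemma corner:
  fixes M :: "nat \<Rightarrow> nat \<Rightarrow> real"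
  assumes n: "n \<ge> 2" and E: "entries n M = real ` {1..n^2}"
    and row: "\<forall>i\<in>{1..n}. \<forall>j. 1 \<le> j \<and> j < n \<longrightarrow> M i j < M i (j + 1)"
    and col: "\<forall>j\<in>{1..n}. \<forall>i. 1 \<le> i \<and> i < n \<longrightarrow> M i j < M (i + 1) j"
  shows "M 1 1 = 1" "M 1 2 = 2 \<or> M 2 1 = 2" "M n n = real (n^2)"
proof -
  have rs: "strict_on n (\<lambda>j. M i j)" if "i \<in> {1..n}" for i using row that unfolding strict_on_def by blast
  have cs: "strict_on n (\<lambda>i. M i j)" if "j \<in> {1..n}" for j using col that unfolding strict_on_def by blast
  have le: "M i j \<le> M i' j'" if "i \<in> {1..n}" "j \<in> {1..n}" "i' \<in> {1..n}" "j' \<in> {1..n}" "i \<le> i'" "j \<le> j'" for i j i' j'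
  proof -
    have "M i j \<le> M i j'" using strict_on_le[OF rs[OF that(1)], of j j'] that by auto
    also have "\<dots> \<le> M i' j'" using strict_on_le[OF cs[OF that(4)], of i i'] that by auto
    finally show ?thesis .
  qed
  have inE: "M i j \<in> real ` {1..n^2}" if "i \<in> {1..n}" "j \<in> {1..n}" for i j
    using E that unfolding entries_def by blast
  have ex: "\<exists>i\<in>{1..n}. \<exists>j\<in>{1..n}. M i j = real k" if "k \<in> {1..n^2}" for k
  proof -
    have "real k \<in> entries n M" using E that by auto
    then obtain i j where "real k = M i j" "i \<in> {1..n}" "j \<in> {1..n}" unfolding entries_def by blast
    then show ?thesis by metis
  qed
  have ge1: "M i j \<ge> 1" if "i \<in> {1..n}" "j \<in> {1..n}" for i j using inE[OF that] by auto
  have n1: "1 \<in> {1..n}" "2 \<in> {1..n}" "n \<in> {1..n}" using n by auto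
  have sq: "n^2 \<ge> 4" using n by (metis power2_nat_le_eq_le power2_eq_square mult_2 numeral_Bit0 numeral_One one_add_one num_double) 
  obtain i j where ij: "i \<in> {1..n}" "j \<in> {1..n}" "M i j = real 1" using ex[of 1] sq by auto
  show m11: "M 1 1 = 1" using le[OF n1(1) n1(1) ij(1,2)] ij ge1[OF n1(1) n1(1)] by auto
  obtain i j where ij: "i \<in> {1..n}" "j \<in> {1..n}" "M i j = real 2" using ex[of 2] sq by auto
  have nat_gt: "M a b \<ge> 2" if ab: "a \<in> {1..n}" "b \<in> {1..n}" "M a b > 1" for a b
  proof -
    obtain k where "M a b = real k" using inE[OF ab(1,2)] by auto
    then show ?thesis using ab(3) by auto
  qed
  have "M 1 1 < M 1 (1+1)" using row n1 n by auto
  then have m12: "M 1 2 > 1" using m11 by (simp add: numeral_2_eq_2)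
  have "M 1 1 < M (1+1) 1" using col n1 n by auto
  then have m21: "M 2 1 > 1" using m11 by (simp add: numeral_2_eq_2)
  show "M 1 2 = 2 \<or> M 2 1 = 2"
  proof (cases "j \<ge> 2")
    case True
    then have "M 1 2 \<le> M i j" using le[OF n1(1) n1(2) ij(1,2)] ij by auto
    then show ?thesis using nat_gt[OF n1(1) n1(2) m12] ij by auto
  next
    case False
    then have j1: "j = 1" using ij by auto
    then have "i \<noteq> 1" using ij m11 by auto
    then have "i \<ge> 2" using ij by auto
    then have "M 2 1 \<le> M i j" using le[OF n1(2) n1(1) ij(1,2)] ij j1 by auto
    then show ?thesis using nat_gt[OF n1(2) n1(1) m21] ij by auto
  qed
  obtain i j where ij: "i \<in> {1..n}" "j \<in> {1..n}" "M i j = real (n^2)" using ex[of "n^2"] sq by auto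
  have "M i j \<le> M n n" using le[OF ij(1,2) n1(3) n1(3)] ij by auto
  moreover obtain k where "M n n = real k" "k \<le> n^2" using inE[OF n1(3) n1(3)] by auto
  ultimately show "M n n = real (n^2)" using ij by auto
qed

lemma entries_inj:
  fixes M :: "nat \<Rightarrow> nat \<Rightarrow> real"
  assumes E: "entries n M = real ` {1..n^2}"
  shows "inj_on (\<lambda>(i,j). M i j) ({1..n} \<times> {1..n})"
proof (rule eq_card_imp_inj_on)
  show "finite ({1..n} \<times> {1..n})" by simp
  have "(\<lambda>(i,j). M i j) ` ({1..n} \<times> {1..n}) = entries n M" unfolding entries_def by (auto; blast)
  then have "card ((\<lambda>(i,j). M i j) ` ({1..n} \<times> {1..n})) = card (real ` {1..n^2})" using E by simp
  also have "\<dots> = n^2" by (simp add: card_image)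
  also have "\<dots> = card ({1..n} \<times> {1..n})" by (simp add: power2_eq_square)
  finally show "card ((\<lambda>(i,j). M i j) ` ({1..n} \<times> {1..n})) = card ({1..n} \<times> {1..n})" .
qed

definition TT :: "int set \<Rightarrow> int set \<Rightarrow> int set" where
  "TT A B = {a + b | a b. a \<in> A \<and> b \<in> B} \<union> {\<bar>a - b\<bar> | a b. a \<in> A \<and> b \<in> B}"

lemma sumset_PM: "sumset (PM A) (PM B) = PM (TT A B)"
proof
  show "sumset (PM A) (PM B) \<subseteq> PM (TT A B)"
  proof
    fix w assume "w \<in> sumset (PM A) (PM B)"
    then obtain u v where w: "w = u + v" "u \<in> PM A" "v \<in> PM B" unfolding sumset_def by blast
    then consider a b where "a \<in> A" "b \<in> B" "u = a" "v = b" | a b where "a \<in> A" "b \<in> B" "u = a" "v = -b"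
      | a b where "a \<in> A" "b \<in> B" "u = -a" "v = b" | a b where "a \<in> A" "b \<in> B" "u = -a" "v = -b"
      unfolding PM_def by blast
    then show "w \<in> PM (TT A B)"
    proof cases
      case (1 a b) then show ?thesis using w unfolding PM_def TT_def by blast
    next
      case (2 a b)
      show ?thesis
      proof (cases "a \<ge> b")
        case True then have "w = \<bar>a - b\<bar>" using 2 w by auto
        then show ?thesis using 2 unfolding PM_def TT_def by blast
      next
        case False then have "w = - \<bar>a - b\<bar>" using 2 w by auto
        then show ?thesis using 2 unfolding PM_def TT_def by blast
      qed
    next
      case (3 a b)
      show ?thesis
      proof (cases "a \<ge> b")
        case True then have "w = - \<bar>a - b\<bar>" using 3 w by auto
        then show ?thesis using 3 unfolding PM_def TT_def by blast
      next
        case False then have "w = \<bar>a - b\<bar>" using 3 w by auto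
        then show ?thesis using 3 unfolding PM_def TT_def by blast
      qed
    next
      case (4 a b) then have "w = - (a + b)" using w by auto
      then show ?thesis using 4 unfolding PM_def TT_def by blast
    qed
  qed
  show "PM (TT A B) \<subseteq> sumset (PM A) (PM B)"
  proof
    fix w assume "w \<in> PM (TT A B)"
    then obtain a b where ab: "a \<in> A" "b \<in> B" and
      c: "w = a + b \<or> w = -(a+b) \<or> w = \<bar>a - b\<bar> \<or> w = - \<bar>a - b\<bar>"
      unfolding PM_def TT_def by blast
    have "a \<in> PM A" "-a \<in> PM A" "b \<in> PM B" "-b \<in> PM B" using ab unfolding PM_def by auto
    moreover have "w = a + b \<or> w = (-a) + (-b) \<or> w = a + (-b) \<or> w = (-a) + b" using c by (auto simp: abs_if)
    ultimately show "w \<in> sumset (PM A) (PM B)" unfolding sumset_def by blast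
  qed
qed

lemma sumset_PM0: "sumset (PM A \<union> {0}) (PM B \<union> {0}) = PM (A \<union> B \<union> TT A B) \<union> {0}"
proof -
  have "sumset (PM A \<union> {0}) (PM B \<union> {0}) = sumset (PM A) (PM B) \<union> PM A \<union> PM B \<union> {0}"
    unfolding sumset_def by (auto; metis add.right_neutral add_0)
  also have "\<dots> = PM (A \<union> B \<union> TT A B) \<union> {0}" unfolding sumset_PM by (auto simp: PM_def)
  finally show ?thesis .
qed

lemma PM_eq:
  assumes "\<forall>t\<in>T. t \<ge> 0" "\<forall>z\<in>Z. z > 0" "PM T = PM Z"
  shows "T = Z"
proof
  show "T \<subseteq> Z"
  proof
    fix t assume t: "t \<in> T"
    then have "t \<in> PM Z" using assms(3) unfolding PM_def by blast
    then show "t \<in> Z" using assms(1,2) t unfolding PM_def by force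
  qed
  show "Z \<subseteq> T"
  proof
    fix t assume t: "t \<in> Z"
    then have "t \<in> PM T" using assms(3) unfolding PM_def by blast
    then show "t \<in> T" using assms(1,2) t unfolding PM_def by force
  qed
qed

lemma PM0_eq:
  assumes "\<forall>t\<in>T. t > 0" "\<forall>z\<in>Z. z > 0" "PM T \<union> {0} = PM Z \<union> {0}"
  shows "T = Z"
proof -
  have "0 \<notin> PM T" "0 \<notin> PM Z" using assms(1,2) unfolding PM_def by force+
  then have "PM T = PM Z" using assms(3) by blast
  then show ?thesis using PM_eq assms(1,2) by (meson less_imp_le)
qed

definition OddS :: "nat \<Rightarrow> int set" where
  "OddS m = {k. odd k \<and> 1 \<le> k \<and> k \<le> 4 * int m ^ 2 - 1}"

lemma PM_OddS: "w \<in> PM (OddS m) \<longleftrightarrow> odd w \<and> \<bar>w\<bar> \<le> 4 * int m ^ 2 - 1"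
proof
  assume "w \<in> PM (OddS m)"
  then show "odd w \<and> \<bar>w\<bar> \<le> 4 * int m ^ 2 - 1" unfolding PM_def OddS_def by auto
next
  assume a: "odd w \<and> \<bar>w\<bar> \<le> 4 * int m ^ 2 - 1"
  then have "w \<noteq> 0" by auto
  show "w \<in> PM (OddS m)"
  proof (cases "w > 0")
    case True then show ?thesis using a unfolding PM_def OddS_def by auto
  next
    case False
    then have "-w \<in> OddS m" using a \<open>w \<noteq> 0\<close> unfolding OddS_def by auto
    then show ?thesis unfolding PM_def by (auto intro: image_eqI[of _ _ "-w"])
  qed
qed

lemma hN: "(\<lambda>w. (real ((2*m)^2) + 1)/2 + 1/2 * of_int w) ` PM (OddS m) = real ` {1..(2*m)^2}"
proof
  let ?N = "4 * int m ^ 2"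
  have rN: "real ((2*m)^2) = of_int ?N" by simp
  show "(\<lambda>w. (real ((2*m)^2) + 1)/2 + 1/2 * of_int w) ` PM (OddS m) \<subseteq> real ` {1..(2*m)^2}"
  proof
    fix v assume "v \<in> (\<lambda>w. (real ((2*m)^2) + 1)/2 + 1/2 * of_int w) ` PM (OddS m)"
    then obtain w where v: "v = (real ((2*m)^2) + 1)/2 + 1/2 * of_int w" and wP: "w \<in> PM (OddS m)"
      by blast
    then have w: "odd w" "\<bar>w\<bar> \<le> ?N - 1" unfolding PM_OddS by auto
    obtain t where t: "w = 2*t + 1" using w(1) by (metis oddE)
    define k where "k = 2 * int m ^ 2 + 1 + t"
    have v2: "v = of_int k" unfolding v k_def rN t by (simp add: field_simps)
    have k1: "1 \<le> k" "k \<le> ?N" using w(2) unfolding k_def t by auto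
    have "int ((2*m)^2) = ?N" by (simp add: power_mult_distrib)
    then have "nat k \<le> (2*m)^2" using k1 by (simp add: nat_le_iff)
    then have "v = real (nat k)" "nat k \<in> {1..(2*m)^2}" using v2 k1 by auto
    then show "v \<in> real ` {1..(2*m)^2}" by blast
  qed
  show "real ` {1..(2*m)^2} \<subseteq> (\<lambda>w. (real ((2*m)^2) + 1)/2 + 1/2 * of_int w) ` PM (OddS m)"
  proof
    fix v assume "v \<in> real ` {1..(2*m)^2}"
    then obtain k where k: "v = real k" "1 \<le> k" "k \<le> (2*m)^2" by auto
    define w where "w = 2 * int k - ?N - 1"
    have "odd w" unfolding w_def by simp
    moreover have "\<bar>w\<bar> \<le> ?N - 1"
    proof -
      have "int k \<le> ?N" using k(3) by (metis of_nat_le_iff power_mult_distrib of_nat_power of_nat_mult of_nat_numeral numeral_Bit0 power2_eq_square mult_2 mult.commute numeral_times_numeral num_double)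
      then show ?thesis unfolding w_def using k(2) by auto
    qed
    ultimately have "w \<in> PM (OddS m)" unfolding PM_OddS by blast
    moreover have "v = (real ((2*m)^2) + 1)/2 + 1/2 * of_int w" unfolding w_def rN k(1) by (simp add: field_simps)
    ultimately show "v \<in> (\<lambda>w. (real ((2*m)^2) + 1)/2 + 1/2 * of_int w) ` PM (OddS m)" by blast
  qed
qed

lemma hI: "(\<lambda>w. (real ((2*m+1)^2) + 1)/2 + 1 * of_int w) ` (PM {1..2 * int m * (int m + 1)} \<union> {0})
   = real ` {1..(2*m+1)^2}"
proof
  let ?K = "2 * int m * (int m + 1)"
  have rN: "(real ((2*m+1)^2) + 1)/2 = of_int (?K + 1)" by (simp add: power2_eq_square algebra_simps)
  have PMK: "PM {1..?K} \<union> {0} = {-?K..?K}"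
  proof
    show "PM {1..?K} \<union> {0} \<subseteq> {-?K..?K}" unfolding PM_def by auto
    show "{-?K..?K} \<subseteq> PM {1..?K} \<union> {0}"
    proof
      fix w assume "w \<in> {-?K..?K}"
      then show "w \<in> PM {1..?K} \<union> {0}" unfolding PM_def
        by (cases "w > 0"; cases "w = 0") (auto intro: image_eqI[of _ _ "-w"])
    qed
  qed
  have sq: "int ((2*m+1)^2) = 2 * ?K + 1" by (simp add: power2_eq_square algebra_simps)
  show "(\<lambda>w. (real ((2*m+1)^2) + 1)/2 + 1 * of_int w) ` (PM {1..?K} \<union> {0}) \<subseteq> real ` {1..(2*m+1)^2}"
  proof
    fix v assume "v \<in> (\<lambda>w. (real ((2*m+1)^2) + 1)/2 + 1 * of_int w) ` (PM {1..?K} \<union> {0})"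
    then obtain w where v: "v = of_int (?K + 1 + w)" and w: "-?K \<le> w" "w \<le> ?K"
      unfolding PMK rN by auto
    have "?K + 1 + w \<le> int ((2*m+1)^2)" using sq w by linarith
    then have "nat (?K + 1 + w) \<le> (2*m+1)^2" by (simp add: nat_le_iff)
    then have "v = real (nat (?K + 1 + w))" "nat (?K + 1 + w) \<in> {1..(2*m+1)^2}" using v w by auto
    then show "v \<in> real ` {1..(2*m+1)^2}" by blast
  qed
  show "real ` {1..(2*m+1)^2} \<subseteq> (\<lambda>w. (real ((2*m+1)^2) + 1)/2 + 1 * of_int w) ` (PM {1..?K} \<union> {0})"
  proof
    fix v assume "v \<in> real ` {1..(2*m+1)^2}"
    then obtain k where k: "v = real k" "1 \<le> k" "k \<le> (2*m+1)^2" by auto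
    define w where "w = int k - ?K - 1"
    have "int k \<le> 2 * ?K + 1" using k(3) sq by linarith
    then have "w \<in> {-?K..?K}" unfolding w_def using k(2) by auto
    moreover have "v = (real ((2*m+1)^2) + 1)/2 + 1 * of_int w" unfolding rN w_def k(1) by simp
    ultimately show "v \<in> (\<lambda>w. (real ((2*m+1)^2) + 1)/2 + 1 * of_int w) ` (PM {1..?K} \<union> {0})"
      unfolding PMK by blast
  qed
qed

lemma strict_on_smaller: "strict_on n x \<Longrightarrow> m \<le> n \<Longrightarrow> strict_on m x"
  unfolding strict_on_def by auto

lemma antisym_ext:
  assumes "antisym_on n x" "antisym_on n x'" "n = 2*m \<or> n = 2*m+1" "\<forall>k\<in>{1..m}. x k = x' k"
  shows "\<forall>k\<in>{1..n}. x k = x' k"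
proof
  fix k assume k: "k \<in> {1..n}"
  consider "k \<le> m" | "n - m < k" | "n = 2*m+1" "k = m+1" using assms(3) k by fastforce
  then show "x k = x' k"
  proof cases
    case 1 then show ?thesis using assms(4) k by auto
  next
    case 2
    have j: "n+1-k \<in> {1..n}" "n+1-k \<in> {1..m}" "n+1-(n+1-k) = k" using k 2 assms(3) by auto
    have "x (n+1-(n+1-k)) = - x (n+1-k)" "x' (n+1-(n+1-k)) = - x' (n+1-k)"
      using assms(1,2) j(1) unfolding antisym_on_def by blast+
    then show ?thesis using j assms(4) by simp
  next
    case 3 then show ?thesis using antisym_mid[OF assms(1)] antisym_mid[OF assms(2)] by simp
  qed
qed

lemma uminus_image_cancel: assumes "uminus ` (X::int set) = uminus ` Y" shows "X = Y"
proof -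
  have "uminus ` uminus ` X = uminus ` uminus ` Y" using assms by simp
  then show ?thesis by (simp add: image_image)
qed

lemma inj_core:
  assumes nm: "n = 2*m \<or> n = 2*m+1" and m: "m \<ge> 1"
    and M: "M = mat n c s x y" and M': "M' = mat n c s x' y'"
    and a: "antisym_on n x" "antisym_on n y" "antisym_on n x'" "antisym_on n y'"
    and st: "strict_on n x" "strict_on n y" "strict_on n x'" "strict_on n y'"
    and E: "entries n M = real ` {1..n^2}"
    and c12: "M 1 2 = 2" "M' 1 2 = 2"
    and g: "{uminus ` x ` {1..m}, uminus ` y ` {1..m}} = {uminus ` x' ` {1..m}, uminus ` y' ` {1..m}}"
  shows "M = M'"
proof -
  have mn: "m \<le> n" using nm by auto
  have same: "\<forall>k\<in>{1..n}. f k = f' k" if "antisym_on n f" "antisym_on n f'" "strict_on n f" "strict_on n f'"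
     "uminus ` f ` {1..m} = uminus ` f' ` {1..m}" for f f'
  proof -
    have "f ` {1..m} = f' ` {1..m}" using uminus_image_cancel that(5) by blast
    then have "\<forall>k\<in>{1..m}. f k = f' k"
      using strict_image_unique[OF strict_on_smaller[OF that(3) mn] strict_on_smaller[OF that(4) mn]] by blast
    then show ?thesis using antisym_ext[OF that(1,2) nm] by blast
  qed
  from g consider "uminus ` x ` {1..m} = uminus ` x' ` {1..m}" "uminus ` y ` {1..m} = uminus ` y' ` {1..m}"
    | "uminus ` x ` {1..m} = uminus ` y' ` {1..m}" "uminus ` y ` {1..m} = uminus ` x' ` {1..m}"
    by (auto simp: doubleton_eq_iff)
  then show ?thesis
  proof cases
    case 1
    have "\<forall>k\<in>{1..n}. x k = x' k" "\<forall>k\<in>{1..n}. y k = y' k"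
      using same[OF a(1,3) st(1,3) 1(1)] same[OF a(2,4) st(2,4) 1(2)] by auto
    then show ?thesis unfolding M M' by (rule mat_cong)
  next
    case 2
    have "\<forall>k\<in>{1..n}. x k = y' k" "\<forall>k\<in>{1..n}. y k = x' k"
      using same[OF a(1,4) st(1,4) 2(1)] same[OF a(2,3) st(2,3) 2(2)] by auto
    then have "mat n c s y x = M'" unfolding M' by (intro mat_cong) auto
    then have "M 2 1 = M' 1 2" unfolding M using mat_transpose[of n c s x y 2 1] by simp
    then have "M 2 1 = M 1 2" using c12 by simp
    moreover have "(2::nat, 1::nat) \<in> {1..n} \<times> {1..n}" "(1::nat, 2::nat) \<in> {1..n} \<times> {1..n}" using nm m by auto
    ultimately have "(2::nat, 1::nat) = (1, 2)" using inj_onD[OF entries_inj[OF E], of "(2,1)" "(1,2)"] by simp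
    then show ?thesis by simp
  qed
qed

lemma prs_int:
  assumes "principal_reversible_square n M" "i \<in> {1..n}" "j \<in> {1..n}" "k \<in> {1..n}" "l \<in> {1..n}"
  shows "of_int \<lfloor>M i j - M k l\<rfloor> = M i j - M k l"
proof -
  have E: "entries n M = real ` {1..n^2}" using assms(1) unfolding principal_reversible_square_def entries_def by blast
  have "M i j \<in> entries n M" "M k l \<in> entries n M" using assms unfolding entries_def by blast+
  then obtain a b :: nat where "M i j = real a" "M k l = real b" using E by auto
  then have "M i j - M k l = of_int (int a - int b)" by simp
  then show ?thesis by (simp only: floor_of_int)
qed

lemma prs_facts:
  assumes "principal_reversible_square n M"
  shows "reversible_square n M" "\<forall>i j. (i \<notin> {1..n} \<or> j \<notin> {1..n}) \<longrightarrow> M i j = 0"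
    "entries n M = real ` {1..n^2}"
    "\<forall>i\<in>{1..n}. \<forall>j. 1 \<le> j \<and> j < n \<longrightarrow> M i j < M i (j + 1)"
    "\<forall>j\<in>{1..n}. \<forall>i. 1 \<le> i \<and> i < n \<longrightarrow> M i j < M (i + 1) j"
    "M 1 1 = 1" "M 1 2 = 2"
proof -
  have d: "reversible_square n M \<and> (\<forall>i j. (i \<notin> {1..n} \<or> j \<notin> {1..n}) \<longrightarrow> M i j = 0) \<and>
    entries n M = real ` {1..n^2} \<and>
    (\<forall>i\<in>{1..n}. \<forall>j. 1 \<le> j \<and> j < n \<longrightarrow> M i j < M i (j + 1)) \<and>
    (\<forall>j\<in>{1..n}. \<forall>i. 1 \<le> i \<and> i < n \<longrightarrow> M i j < M (i + 1) j) \<and>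
    M 1 1 = 1 \<and> M 1 2 = 2" using assms unfolding principal_reversible_square_def entries_def .
  then show "reversible_square n M" "\<forall>i j. (i \<notin> {1..n} \<or> j \<notin> {1..n}) \<longrightarrow> M i j = 0"
    "entries n M = real ` {1..n^2}"
    "\<forall>i\<in>{1..n}. \<forall>j. 1 \<le> j \<and> j < n \<longrightarrow> M i j < M i (j + 1)"
    "\<forall>j\<in>{1..n}. \<forall>i. 1 \<le> i \<and> i < n \<longrightarrow> M i j < M (i + 1) j"
    "M 1 1 = 1" "M 1 2 = 2" by blast+
qed

lemma prs_intro:
  assumes "reversible_square n M" "\<forall>i j. (i \<notin> {1..n} \<or> j \<notin> {1..n}) \<longrightarrow> M i j = 0"
    "entries n M = real ` {1..n^2}"
    "\<forall>i\<in>{1..n}. \<forall>j. 1 \<le> j \<and> j < n \<longrightarrow> M i j < M i (j + 1)"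
    "\<forall>j\<in>{1..n}. \<forall>i. 1 \<le> i \<and> i < n \<longrightarrow> M i j < M (i + 1) j"
    "M 1 1 = 1" "M 1 2 = 2"
  shows "principal_reversible_square n M"
  unfolding principal_reversible_square_def using assms unfolding entries_def by blast

lemma rev_ids:
  assumes "reversible_square n M" "i \<in> {1..n}" "j \<in> {1..n}" "n \<ge> 1"
  shows "M i j + M 1 1 = M i 1 + M 1 j"
    "M i 1 + M (n+1-i) 1 = M 1 1 + M n 1"
    "M 1 j + M 1 (n+1-j) = M 1 1 + M 1 n"
proof -
  have o: "1 \<in> {1..n}" using assms(4) by auto
  have RV: "(\<forall>i\<in>{1..n}. \<forall>j\<in>{1..n}. \<forall>k\<in>{1..n}.
        M i j + M i (n + 1 - j) = M i k + M i (n + 1 - k) \<and>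
        M i j + M (n + 1 - i) j = M k j + M (n + 1 - k) j) \<and> (\<forall>i\<in>{1..n}. \<forall>j\<in>{1..n}. \<forall>k\<in>{1..n}. \<forall>l\<in>{1..n}.
        M i j + M k l = M i l + M k j)" using assms(1) unfolding reversible_square_def .
  note R = conjunct1[OF RV] and V = conjunct2[OF RV]
  show "M i j + M 1 1 = M i 1 + M 1 j" using V[rule_format, OF assms(2) assms(3) o o] .
  have "M i 1 + M (n+1-i) 1 = M 1 1 + M (n+1-1) 1" using conjunct2[OF R[rule_format, OF assms(2) o o]] .
  then show "M i 1 + M (n+1-i) 1 = M 1 1 + M n 1" by simp
  have "M 1 j + M 1 (n+1-j) = M 1 1 + M 1 (n+1-1)" using conjunct1[OF R[rule_format, OF o assms(3) o]] .
  then show "M 1 j + M 1 (n+1-j) = M 1 1 + M 1 n" by simp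
qed

definition xN :: "nat \<Rightarrow> (nat \<Rightarrow> nat \<Rightarrow> real) \<Rightarrow> nat \<Rightarrow> int" where
  "xN n M i = \<lfloor>M i 1 - M (n+1-i) 1\<rfloor>"
definition yN :: "nat \<Rightarrow> (nat \<Rightarrow> nat \<Rightarrow> real) \<Rightarrow> nat \<Rightarrow> int" where
  "yN n M j = \<lfloor>M 1 j - M 1 (n+1-j)\<rfloor>"
definition gN :: "nat \<Rightarrow> nat \<Rightarrow> (nat \<Rightarrow> nat \<Rightarrow> real) \<Rightarrow> int set set" where
  "gN n m M = {uminus ` xN n M ` {1..m}, uminus ` yN n M ` {1..m}}"

definition sdsN :: "nat \<Rightarrow> int set \<Rightarrow> int set \<Rightarrow> bool" where
  "sdsN m A B \<longleftrightarrow> finite A \<and> finite B \<and> card A = m \<and> card B = m \<and>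
     (\<forall>a\<in>A. a > 0) \<and> (\<forall>b\<in>B. b > 0) \<and> TT A B = OddS m"

lemma non_incl_iff: "non_incl_sds m S \<longleftrightarrow> (\<exists>A B. S = {A, B} \<and> sdsN m A B)"
  unfolding non_incl_sds_def sdsN_def TT_def OddS_def by (rule refl)

lemma TT_sym: "TT A B = TT B A"
  unfolding TT_def by (auto simp: add.commute abs_minus_commute)

lemma sdsN_sym: "sdsN m A B \<Longrightarrow> sdsN m B A"
  unfolding sdsN_def using TT_sym by metis

lemma decompN:
  assumes n: "n = 2*m" and m: "m \<ge> 1" and P: "principal_reversible_square n M"
  shows "antisym_on n (xN n M)" "antisym_on n (yN n M)" "strict_on n (xN n M)" "strict_on n (yN n M)"
    "M = mat n ((real (n^2) + 1)/2) (1/2) (xN n M) (yN n M)"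
proof -
  note f = prs_facts[OF P]
  have n1: "n \<ge> 2" using n m by auto
  have c: "M n n = real (n^2)" using corner[OF n1 f(3) f(4) f(5)] by blast
  have dom: "n+1-i \<in> {1..n}" if "i \<in> {1..n}" for i using that by auto
  have o1: "1 \<in> {1..n}" "n \<in> {1..n}" using n1 by auto
  have X: "of_int (xN n M i) = M i 1 - M (n+1-i) 1" if "i \<in> {1..n}" for i
    unfolding xN_def using prs_int[OF P that o1(1) dom[OF that] o1(1)] .
  have Y: "of_int (yN n M j) = M 1 j - M 1 (n+1-j)" if "j \<in> {1..n}" for j
    unfolding yN_def using prs_int[OF P o1(1) that o1(1) dom[OF that]] .
  have bk: "n+1-(n+1-i) = i" if "i \<in> {1..n}" for i using that by auto
  show "antisym_on n (xN n M)" unfolding antisym_on_def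
  proof
    fix i assume i: "i \<in> {1..n}"
    have "(of_int (xN n M (n+1-i)) :: real) = - of_int (xN n M i)" using X[OF dom[OF i]] X[OF i] bk[OF i] by simp
    then show "xN n M (n+1-i) = - xN n M i" by linarith
  qed
  show "antisym_on n (yN n M)" unfolding antisym_on_def
  proof
    fix i assume i: "i \<in> {1..n}"
    have "(of_int (yN n M (n+1-i)) :: real) = - of_int (yN n M i)" using Y[OF dom[OF i]] Y[OF i] bk[OF i] by simp
    then show "yN n M (n+1-i) = - yN n M i" by linarith
  qed
  show "strict_on n (xN n M)" unfolding strict_on_def
  proof (intro allI impI)
    fix i assume i: "1 \<le> i \<and> i < n"
    have "M i 1 < M (i+1) 1" using f(5) o1 i by blast
    moreover have "M (n-i) 1 < M (n-i+1) 1" using f(5) o1 i by auto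
    moreover have "n - i + 1 = n + 1 - i" "n + 1 - (i+1) = n - i" using i by auto
    ultimately have "(of_int (xN n M i) :: real) < of_int (xN n M (i+1))" using X[of i] X[of "i+1"] i by auto
    then show "xN n M i < xN n M (i+1)" by linarith
  qed
  show "strict_on n (yN n M)" unfolding strict_on_def
  proof (intro allI impI)
    fix i assume i: "1 \<le> i \<and> i < n"
    have "M 1 i < M 1 (i+1)" using f(4) o1 i by blast
    moreover have "M 1 (n-i) < M 1 (n-i+1)" using f(4) o1 i by auto
    moreover have "n - i + 1 = n + 1 - i" "n + 1 - (i+1) = n - i" using i by auto
    ultimately have "(of_int (yN n M i) :: real) < of_int (yN n M (i+1))" using Y[of i] Y[of "i+1"] i by auto
    then show "yN n M i < yN n M (i+1)" by linarith
  qed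
  show "M = mat n ((real (n^2) + 1)/2) (1/2) (xN n M) (yN n M)"
  proof (intro ext)
    fix i j
    show "M i j = mat n ((real (n^2) + 1)/2) (1/2) (xN n M) (yN n M) i j"
    proof (cases "i \<in> {1..n} \<and> j \<in> {1..n}")
      case True
      then have i: "i \<in> {1..n}" and j: "j \<in> {1..n}" by auto
      have r1: "M i j + M 1 1 = M i 1 + M 1 j" "M i 1 + M (n+1-i) 1 = M 1 1 + M n 1"
        "M 1 j + M 1 (n+1-j) = M 1 1 + M 1 n" using rev_ids[OF f(1) i j] n1 by auto
      have r2: "M n n + M 1 1 = M n 1 + M 1 n" using rev_ids[OF f(1) o1(2) o1(2)] n1 by auto
      show ?thesis unfolding mat_def using True X[OF i] Y[OF j] r1 r2 c f(6) by (simp add: field_simps)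
    next
      case False
      then show ?thesis using f(2) mat_zero by metis
    qed
  qed
qed

lemma neg_first:
  assumes "antisym_on n x" "strict_on n x" "n = 2*m \<or> n = 2*m+1" "i \<in> {1..m}"
  shows "x i < 0"
proof -
  have "x i < x (n+1-i)" using strict_on_less[OF assms(2), of i "n+1-i"] assms(3,4) by auto
  moreover have "x (n+1-i) = - x i" using assms(1,3,4) unfolding antisym_on_def by auto
  ultimately show ?thesis by simp
qed

lemma card_neg_image:
  fixes x :: "nat \<Rightarrow> int"
  assumes "strict_on n x" "n = 2*m \<or> n = 2*m+1"
  shows "card (uminus ` x ` {1..m}) = m"
proof -
  have "inj_on x {1..m}" using strict_on_inj[OF assms(1)] assms(2) by auto
  then have "card (x ` {1..m}) = m" by (simp add: card_image)
  moreover have "inj_on uminus (x ` {1..m})" by (simp add: inj_on_def)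
  ultimately show ?thesis by (simp add: card_image)
qed

lemma hN_inj: "inj (\<lambda>w::int. (real ((2*m)^2) + 1)/2 + 1/2 * of_int w)"
  by (rule injI) simp

lemma gN_in:
  assumes n: "n = 2*m" and m: "m \<ge> 1" and P: "principal_reversible_square n M"
  shows "sdsN m (uminus ` xN n M ` {1..m}) (uminus ` yN n M ` {1..m})"
proof -
  note d = decompN[OF n m P]
  let ?A = "uminus ` xN n M ` {1..m}" and ?B = "uminus ` yN n M ` {1..m}"
  have nm: "n = 2*m \<or> n = 2*m+1" using n by simp
  have posA: "\<forall>a\<in>?A. a > 0" using neg_first[OF d(1) d(3) nm] by auto
  have posB: "\<forall>a\<in>?B. a > 0" using neg_first[OF d(2) d(4) nm] by auto
  have xa: "xN n M ` {1..n} = PM ?A" using antisym_image[OF d(1) nm] n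
    by (simp add: PM_def image_image Un_commute)
  have ya: "yN n M ` {1..n} = PM ?B" using antisym_image[OF d(2) nm] n
    by (simp add: PM_def image_image Un_commute)
  have "entries n M = (\<lambda>w. (real (n^2) + 1)/2 + 1/2 * of_int w) ` sumset (PM ?A) (PM ?B)"
    using mat_entries d(5) xa ya by metis
  moreover have "entries n M = real ` {1..n^2}" using prs_facts[OF P] by blast
  ultimately have "(\<lambda>w. (real ((2*m)^2) + 1)/2 + 1/2 * of_int w) ` sumset (PM ?A) (PM ?B)
     = (\<lambda>w. (real ((2*m)^2) + 1)/2 + 1/2 * of_int w) ` PM (OddS m)" using hN[of m] n by simp
  then have "sumset (PM ?A) (PM ?B) = PM (OddS m)" using hN_inj[of m] by (simp add: inj_image_eq_iff)
  then have "PM (TT ?A ?B) = PM (OddS m)" by (simp add: sumset_PM)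
  moreover have "\<forall>t\<in>TT ?A ?B. t \<ge> 0" using posA posB unfolding TT_def by force
  moreover have "\<forall>z\<in>OddS m. z > 0" unfolding OddS_def by auto
  ultimately have "TT ?A ?B = OddS m" using PM_eq by blast
  then show ?thesis unfolding sdsN_def using posA posB card_neg_image[OF d(3) nm] card_neg_image[OF d(4) nm]
    by auto
qed

lemma buildN:
  assumes n: "n = 2*m" and m: "m \<ge> 1" and S: "sdsN m A B"
  defines "M0 \<equiv> mat n ((real (n^2) + 1)/2) (1/2) (xs n m A) (xs n m B)"
  shows "reversible_square n M0" "\<forall>i j. (i \<notin> {1..n} \<or> j \<notin> {1..n}) \<longrightarrow> M0 i j = 0"
    "entries n M0 = real ` {1..n^2}"
    "\<forall>i\<in>{1..n}. \<forall>j. 1 \<le> j \<and> j < n \<longrightarrow> M0 i j < M0 i (j + 1)"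
    "\<forall>j\<in>{1..n}. \<forall>i. 1 \<le> i \<and> i < n \<longrightarrow> M0 i j < M0 (i + 1) j"
    "M0 1 1 = 1" "M0 1 2 = 2 \<or> M0 2 1 = 2" "gN n m M0 = {A, B}"
proof -
  have nm: "n = 2*m \<or> n = 2*m+1" using n by simp
  have s: "finite A" "card A = m" "\<forall>a\<in>A. a > 0" "finite B" "card B = m" "\<forall>a\<in>B. a > 0" "TT A B = OddS m"
    using S unfolding sdsN_def by auto
  note pa = xs_props[OF nm s(1-3)] and pb = xs_props[OF nm s(4-6)]
  show r: "reversible_square n M0" unfolding M0_def by (rule mat_rev[OF pa(1) pb(1)])
  show z: "\<forall>i j. (i \<notin> {1..n} \<or> j \<notin> {1..n}) \<longrightarrow> M0 i j = 0" unfolding M0_def using mat_zero by blast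
  have xa: "xs n m A ` {1..n} = PM A" using antisym_image[OF pa(1) nm] n pa(3) by simp
  have ya: "xs n m B ` {1..n} = PM B" using antisym_image[OF pb(1) nm] n pb(3) by simp
  have "entries n M0 = (\<lambda>w. (real (n^2) + 1)/2 + 1/2 * of_int w) ` PM (OddS m)"
    unfolding M0_def mat_entries xa ya sumset_PM s(7) ..
  then show e: "entries n M0 = real ` {1..n^2}" using hN[of m] n by simp
  show rw: "\<forall>i\<in>{1..n}. \<forall>j. 1 \<le> j \<and> j < n \<longrightarrow> M0 i j < M0 i (j + 1)"
    "\<forall>j\<in>{1..n}. \<forall>i. 1 \<le> i \<and> i < n \<longrightarrow> M0 i j < M0 (i + 1) j"
    unfolding M0_def using mat_incr[OF _ pa(2) pb(2)] by auto
  have n2: "n \<ge> 2" using n m by auto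
  show "M0 1 1 = 1" "M0 1 2 = 2 \<or> M0 2 1 = 2" using corner[OF n2 e rw] by auto
  have xv: "xN n M0 i = xs n m A i" if "i \<in> {1..m}" for i
  proof -
    have "i \<in> {1..n}" "n+1-i \<in> {1..n}" "1 \<in> {1..n}" using that n by auto
    moreover have "xs n m A (n+1-i) = - xs n m A i" using pa(1) that n unfolding antisym_on_def by auto
    ultimately have "M0 i 1 - M0 (n+1-i) 1 = of_int (xs n m A i)" unfolding M0_def mat_def by (simp add: field_simps)
    then show ?thesis unfolding xN_def by simp
  qed
  have yv: "yN n M0 i = xs n m B i" if "i \<in> {1..m}" for i
  proof -
    have "i \<in> {1..n}" "n+1-i \<in> {1..n}" "1 \<in> {1..n}" using that n by auto
    moreover have "xs n m B (n+1-i) = - xs n m B i" using pb(1) that n unfolding antisym_on_def by auto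
    ultimately have "M0 1 i - M0 1 (n+1-i) = of_int (xs n m B i)" unfolding M0_def mat_def by (simp add: field_simps)
    then show ?thesis unfolding yN_def by simp
  qed
  have "xN n M0 ` {1..m} = xs n m A ` {1..m}" "yN n M0 ` {1..m} = xs n m B ` {1..m}"
    using xv yv by (auto intro!: image_cong)
  then show "gN n m M0 = {A, B}" unfolding gN_def using pa(3) pb(3) by simp
qed

lemma non_incl_bij:
  assumes m: "m \<ge> 1"
  shows "\<exists>f. bij_betw f {S. non_incl_sds m S} {M. principal_reversible_square (2 * m) M}"
proof -
  define n where "n = 2*m"
  have nm: "n = 2*m" "n = 2*m \<or> n = 2*m+1" using n_def by auto
  have b: "bij_betw (gN n m) {M. principal_reversible_square n M} {S. non_incl_sds m S}"
    unfolding bij_betw_def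
  proof
    show "inj_on (gN n m) {M. principal_reversible_square n M}"
    proof (rule inj_onI)
      fix M M' assume P: "M \<in> {M. principal_reversible_square n M}" "M' \<in> {M. principal_reversible_square n M}"
        and g: "gN n m M = gN n m M'"
      have P1: "principal_reversible_square n M" and P2: "principal_reversible_square n M'" using P by auto
      note d = decompN[OF nm(1) m P1] and d' = decompN[OF nm(1) m P2]
      show "M = M'"
      proof (rule inj_core[OF nm(2) m d(5) d'(5) d(1) d(2) d'(1) d'(2) d(3) d(4) d'(3) d'(4)])
        show "M 1 2 = 2" using prs_facts(7)[OF P1] .
        show "M' 1 2 = 2" using prs_facts(7)[OF P2] .
        show "entries n M = real ` {1..n^2}" using prs_facts(3)[OF P1] .
        show "{uminus ` xN n M ` {1..m}, uminus ` yN n M ` {1..m}} = {uminus ` xN n M' ` {1..m}, uminus ` yN n M' ` {1..m}}"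
          using g unfolding gN_def .
      qed
    qed
    show "gN n m ` {M. principal_reversible_square n M} = {S. non_incl_sds m S}"
    proof
      show "gN n m ` {M. principal_reversible_square n M} \<subseteq> {S. non_incl_sds m S}"
        using gN_in[OF nm(1) m] unfolding non_incl_iff gN_def by blast
      show "{S. non_incl_sds m S} \<subseteq> gN n m ` {M. principal_reversible_square n M}"
      proof
        fix S assume "S \<in> {S. non_incl_sds m S}"
        then obtain A B where S: "S = {A, B}" "sdsN m A B" unfolding non_incl_iff by blast
        have S': "sdsN m B A" using sdsN_sym[OF S(2)] .
        note b1 = buildN[OF nm(1) m S(2)] and b2 = buildN[OF nm(1) m S']
        let ?M1 = "mat n ((real (n^2) + 1)/2) (1/2) (xs n m A) (xs n m B)"
        let ?M2 = "mat n ((real (n^2) + 1)/2) (1/2) (xs n m B) (xs n m A)"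
        have t: "?M2 1 2 = ?M1 2 1" using mat_transpose by metis
        show "S \<in> gN n m ` {M. principal_reversible_square n M}"
        proof (cases "?M1 1 2 = 2")
          case True
          then have "principal_reversible_square n ?M1" using b1 by (intro prs_intro) auto
          then show ?thesis using b1(8) S(1) by blast
        next
          case False
          then have "?M2 1 2 = 2" using b1(7) t by simp
          then have "principal_reversible_square n ?M2" using b2 by (intro prs_intro) auto
          moreover have "gN n m ?M2 = S" using b2(8) S(1) by auto
          ultimately show ?thesis by blast
        qed
      qed
    qed
  qed
  show ?thesis using bij_betw_inv_into[OF b] n_def by blast
qed

definition xI :: "nat \<Rightarrow> (nat \<Rightarrow> nat \<Rightarrow> real) \<Rightarrow> nat \<Rightarrow> int" where
  "xI m M i = \<lfloor>M i 1 - M (m+1) 1\<rfloor>"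
definition yI :: "nat \<Rightarrow> (nat \<Rightarrow> nat \<Rightarrow> real) \<Rightarrow> nat \<Rightarrow> int" where
  "yI m M j = \<lfloor>M 1 j - M 1 (m+1)\<rfloor>"
definition gI :: "nat \<Rightarrow> (nat \<Rightarrow> nat \<Rightarrow> real) \<Rightarrow> int set set" where
  "gI m M = {uminus ` xI m M ` {1..m}, uminus ` yI m M ` {1..m}}"

definition sdsI :: "nat \<Rightarrow> int set \<Rightarrow> int set \<Rightarrow> bool" where
  "sdsI m A B \<longleftrightarrow> finite A \<and> finite B \<and> card A = m \<and> card B = m \<and>
     (\<forall>a\<in>A. a > 0) \<and> (\<forall>b\<in>B. b > 0) \<and> A \<union> B \<union> TT A B = {1 .. 2 * int m * (int m + 1)}"

lemma incl_iff: "incl_sds m S \<longleftrightarrow> (\<exists>A B. S = {A, B} \<and> sdsI m A B)"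
  unfolding incl_sds_def sdsI_def TT_def by (simp only: Un_assoc)

lemma sdsI_sym: assumes "sdsI m A B" shows "sdsI m B A"
proof -
  have "B \<union> A \<union> TT B A = A \<union> B \<union> TT A B" using TT_sym[of A B] by (simp add: Un_commute)
  then show ?thesis using assms unfolding sdsI_def by simp
qed

lemma decompI:
  assumes n: "n = 2*m+1" and m: "m \<ge> 1" and P: "principal_reversible_square n M"
  shows "antisym_on n (xI m M)" "antisym_on n (yI m M)" "strict_on n (xI m M)" "strict_on n (yI m M)"
    "M = mat n ((real (n^2) + 1)/2) 1 (xI m M) (yI m M)"
proof -
  note f = prs_facts[OF P]
  have n1: "n \<ge> 2" using n m by auto
  have c: "M n n = real (n^2)" using corner[OF n1 f(3) f(4) f(5)] by blast
  have dom: "n+1-i \<in> {1..n}" if "i \<in> {1..n}" for i using that by auto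
  have o1: "1 \<in> {1..n}" "n \<in> {1..n}" "m+1 \<in> {1..n}" using n1 n by auto
  have mid: "n+1-(m+1) = m+1" using n by simp
  have X: "of_int (xI m M i) = M i 1 - M (m+1) 1" if "i \<in> {1..n}" for i
    unfolding xI_def using prs_int[OF P that o1(1) o1(3) o1(1)] .
  have Y: "of_int (yI m M j) = M 1 j - M 1 (m+1)" if "j \<in> {1..n}" for j
    unfolding yI_def using prs_int[OF P o1(1) that o1(1) o1(3)] .
  have cm: "M (m+1) 1 + M (m+1) 1 = M 1 1 + M n 1" "M 1 (m+1) + M 1 (m+1) = M 1 1 + M 1 n"
    using rev_ids(2,3)[OF f(1) o1(3) o1(3)] n1 mid by auto
  have bk: "n+1-(n+1-i) = i" if "i \<in> {1..n}" for i using that by auto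
  show "antisym_on n (xI m M)" unfolding antisym_on_def
  proof
    fix i assume i: "i \<in> {1..n}"
    have "M i 1 + M (n+1-i) 1 = M 1 1 + M n 1" using rev_ids(2)[OF f(1) i i] n1 by auto
    then have "(of_int (xI m M (n+1-i)) :: real) = - of_int (xI m M i)" using X[OF dom[OF i]] X[OF i] cm by simp
    then show "xI m M (n+1-i) = - xI m M i" by linarith
  qed
  show "antisym_on n (yI m M)" unfolding antisym_on_def
  proof
    fix i assume i: "i \<in> {1..n}"
    have "M 1 i + M 1 (n+1-i) = M 1 1 + M 1 n" using rev_ids(3)[OF f(1) i i] n1 by auto
    then have "(of_int (yI m M (n+1-i)) :: real) = - of_int (yI m M i)" using Y[OF dom[OF i]] Y[OF i] cm by simp
    then show "yI m M (n+1-i) = - yI m M i" by linarith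
  qed
  show "strict_on n (xI m M)" unfolding strict_on_def
  proof (intro allI impI)
    fix i assume i: "1 \<le> i \<and> i < n"
    have "M i 1 < M (i+1) 1" using f(5) o1 i by blast
    then have "(of_int (xI m M i) :: real) < of_int (xI m M (i+1))" using X[of i] X[of "i+1"] i by auto
    then show "xI m M i < xI m M (i+1)" by linarith
  qed
  show "strict_on n (yI m M)" unfolding strict_on_def
  proof (intro allI impI)
    fix i assume i: "1 \<le> i \<and> i < n"
    have "M 1 i < M 1 (i+1)" using f(4) o1 i by blast
    then have "(of_int (yI m M i) :: real) < of_int (yI m M (i+1))" using Y[of i] Y[of "i+1"] i by auto
    then show "yI m M i < yI m M (i+1)" by linarith
  qed
  show "M = mat n ((real (n^2) + 1)/2) 1 (xI m M) (yI m M)"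
  proof (intro ext)
    fix i j
    show "M i j = mat n ((real (n^2) + 1)/2) 1 (xI m M) (yI m M) i j"
    proof (cases "i \<in> {1..n} \<and> j \<in> {1..n}")
      case True
      then have i: "i \<in> {1..n}" and j: "j \<in> {1..n}" by auto
      have r1: "M i j + M 1 1 = M i 1 + M 1 j" using rev_ids[OF f(1) i j] n1 by auto
      have r2: "M n n + M 1 1 = M n 1 + M 1 n" using rev_ids[OF f(1) o1(2) o1(2)] n1 by auto
      show ?thesis unfolding mat_def using True X[OF i] Y[OF j] r1 r2 c cm f(6) by (simp add: field_simps)
    next
      case False
      then show ?thesis using f(2) mat_zero by metis
    qed
  qed
qed

lemma hI_inj: "inj (\<lambda>w::int. (real ((2*m+1)^2) + 1)/2 + 1 * of_int w)"
  by (rule injI) simp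

lemma gI_in:
  assumes n: "n = 2*m+1" and m: "m \<ge> 1" and P: "principal_reversible_square n M"
  shows "sdsI m (uminus ` xI m M ` {1..m}) (uminus ` yI m M ` {1..m})"
proof -
  note d = decompI[OF n m P]
  let ?A = "uminus ` xI m M ` {1..m}" and ?B = "uminus ` yI m M ` {1..m}"
  let ?c = "(real (n^2) + 1)/2"
  have nm: "n = 2*m \<or> n = 2*m+1" using n by simp
  have posA: "\<forall>a\<in>?A. a > 0" using neg_first[OF d(1) d(3) nm] by auto
  have posB: "\<forall>a\<in>?B. a > 0" using neg_first[OF d(2) d(4) nm] by auto
  have disj: "?A \<inter> ?B = {}"
  proof (rule ccontr)
    assume "?A \<inter> ?B \<noteq> {}"
    then obtain a where "a \<in> ?A" "a \<in> ?B" by blast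
    then obtain i j where "i \<in> {1..m}" "a = - xI m M i" "j \<in> {1..m}" "a = - yI m M j" by blast
    then have ij: "i \<in> {1..m}" "j \<in> {1..m}" "xI m M i = yI m M j" by auto
    have dm: "i \<in> {1..n}" "n+1-j \<in> {1..n}" "m+1 \<in> {1..n}" "j \<in> {1..n}" using ij n by auto
    have "yI m M (n+1-j) = - yI m M j" using d(2) dm(4) unfolding antisym_on_def by blast
    then have "M i (n+1-j) = ?c" using dm ij(3) by (subst d(5)) (simp add: mat_def)
    moreover have "M (m+1) (m+1) = ?c" using dm antisym_mid[OF d(1) n] antisym_mid[OF d(2) n] by (subst d(5)) (simp add: mat_def)
    moreover have "(i, n+1-j) \<in> {1..n} \<times> {1..n}" "(m+1, m+1) \<in> {1..n} \<times> {1..n}" using dm by auto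
    ultimately have "(i, n+1-j) = (m+1, m+1)" using inj_onD[OF entries_inj[OF prs_facts(3)[OF P]], of "(i, n+1-j)" "(m+1,m+1)"] by simp
    then show False using ij by auto
  qed
  have xa: "xI m M ` {1..n} = PM ?A \<union> {0}" using antisym_image[OF d(1) nm] n
    by (simp add: PM_def image_image Un_commute)
  have ya: "yI m M ` {1..n} = PM ?B \<union> {0}" using antisym_image[OF d(2) nm] n
    by (simp add: PM_def image_image Un_commute)
  have "entries n M = (\<lambda>w. (real (n^2) + 1)/2 + 1 * of_int w) ` sumset (xI m M ` {1..n}) (yI m M ` {1..n})"
    using mat_entries d(5) by metis
  then have E1: "entries n M = (\<lambda>w. (real (n^2) + 1)/2 + 1 * of_int w) ` (PM (?A \<union> ?B \<union> TT ?A ?B) \<union> {0})"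
    unfolding xa ya sumset_PM0 .
  have E2: "entries n M = real ` {1..n^2}" using prs_facts[OF P] by blast
  have "(\<lambda>w. (real ((2*m+1)^2) + 1)/2 + 1 * of_int w) ` (PM (?A \<union> ?B \<union> TT ?A ?B) \<union> {0})
     = (\<lambda>w. (real ((2*m+1)^2) + 1)/2 + 1 * of_int w) ` (PM {1..2 * int m * (int m + 1)} \<union> {0})"
  proof -
    have E3: "(\<lambda>w. (real (n^2) + 1)/2 + 1 * of_int w) ` (PM (?A \<union> ?B \<union> TT ?A ?B) \<union> {0}) = real ` {1..n^2}"
      using E1 E2 by (rule subst)
    have E4: "(\<lambda>w. (real ((2*m+1)^2) + 1)/2 + 1 * of_int w) ` (PM (?A \<union> ?B \<union> TT ?A ?B) \<union> {0}) = real ` {1..(2*m+1)^2}"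
      using E3 unfolding n .
    show ?thesis using trans[OF E4 sym[OF hI[of m]]] .
  qed
  then have eqPM: "PM (?A \<union> ?B \<union> TT ?A ?B) \<union> {0} = PM {1..2 * int m * (int m + 1)} \<union> {0}"
    by (simp only: inj_image_eq_iff[OF hI_inj[of m]])
  have posU: "\<forall>t\<in>?A \<union> ?B \<union> TT ?A ?B. t > 0"
  proof
    fix t assume "t \<in> ?A \<union> ?B \<union> TT ?A ?B"
    then consider "t \<in> ?A" | "t \<in> ?B" | a b where "a \<in> ?A" "b \<in> ?B" "t = a + b"
      | a b where "a \<in> ?A" "b \<in> ?B" "t = \<bar>a - b\<bar>" unfolding TT_def by blast
    then show "t > 0"
    proof cases
      case (3 a b) then show ?thesis using posA posB by force
    next
      case (4 a b)
      then have "a \<noteq> b" using disj by auto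
      then show ?thesis using 4 by auto
    qed (use posA posB in auto)
  qed
  have posK: "\<forall>z\<in>{1..2 * int m * (int m + 1)}. z > 0" by auto
  have "?A \<union> ?B \<union> TT ?A ?B = {1..2 * int m * (int m + 1)}" using PM0_eq[OF posU posK eqPM] .
  then show ?thesis unfolding sdsI_def using posA posB card_neg_image[OF d(3) nm] card_neg_image[OF d(4) nm]
    by auto
qed

lemma buildI:
  assumes n: "n = 2*m+1" and m: "m \<ge> 1" and S: "sdsI m A B"
  defines "M0 \<equiv> mat n ((real (n^2) + 1)/2) 1 (xs n m A) (xs n m B)"
  shows "reversible_square n M0" "\<forall>i j. (i \<notin> {1..n} \<or> j \<notin> {1..n}) \<longrightarrow> M0 i j = 0"
    "entries n M0 = real ` {1..n^2}"
    "\<forall>i\<in>{1..n}. \<forall>j. 1 \<le> j \<and> j < n \<longrightarrow> M0 i j < M0 i (j + 1)"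
    "\<forall>j\<in>{1..n}. \<forall>i. 1 \<le> i \<and> i < n \<longrightarrow> M0 i j < M0 (i + 1) j"
    "M0 1 1 = 1" "M0 1 2 = 2 \<or> M0 2 1 = 2" "gI m M0 = {A, B}"
proof -
  have nm: "n = 2*m \<or> n = 2*m+1" using n by simp
  have s: "finite A" "card A = m" "\<forall>a\<in>A. a > 0" "finite B" "card B = m" "\<forall>a\<in>B. a > 0"
    "A \<union> B \<union> TT A B = {1 .. 2 * int m * (int m + 1)}"
    using S unfolding sdsI_def by auto
  note pa = xs_props[OF nm s(1-3)] and pb = xs_props[OF nm s(4-6)]
  show r: "reversible_square n M0" unfolding M0_def by (rule mat_rev[OF pa(1) pb(1)])
  show z: "\<forall>i j. (i \<notin> {1..n} \<or> j \<notin> {1..n}) \<longrightarrow> M0 i j = 0" unfolding M0_def using mat_zero by blast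
  have xa: "xs n m A ` {1..n} = PM A \<union> {0}" using antisym_image[OF pa(1) nm] n pa(3) by simp
  have ya: "xs n m B ` {1..n} = PM B \<union> {0}" using antisym_image[OF pb(1) nm] n pb(3) by simp
  have "entries n M0 = (\<lambda>w. (real (n^2) + 1)/2 + 1 * of_int w) ` (PM {1 .. 2 * int m * (int m + 1)} \<union> {0})"
    unfolding M0_def mat_entries xa ya sumset_PM0 s(7) ..
  then show e: "entries n M0 = real ` {1..n^2}" using hI[of m] n by simp
  show rw: "\<forall>i\<in>{1..n}. \<forall>j. 1 \<le> j \<and> j < n \<longrightarrow> M0 i j < M0 i (j + 1)"
    "\<forall>j\<in>{1..n}. \<forall>i. 1 \<le> i \<and> i < n \<longrightarrow> M0 i j < M0 (i + 1) j"
    unfolding M0_def using mat_incr[OF _ pa(2) pb(2)] by auto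
  have n2: "n \<ge> 2" using n m by auto
  show "M0 1 1 = 1" "M0 1 2 = 2 \<or> M0 2 1 = 2" using corner[OF n2 e rw] by auto
  have za: "xs n m A (m+1) = 0" "xs n m B (m+1) = 0" using antisym_mid[OF pa(1) n] antisym_mid[OF pb(1) n] by auto
  have xv: "xI m M0 i = xs n m A i" if "i \<in> {1..m}" for i
  proof -
    have "i \<in> {1..n}" "m+1 \<in> {1..n}" "1 \<in> {1..n}" using that n by auto
    then have "M0 i 1 - M0 (m+1) 1 = of_int (xs n m A i)" unfolding M0_def mat_def using za by simp
    then show ?thesis unfolding xI_def by simp
  qed
  have yv: "yI m M0 i = xs n m B i" if "i \<in> {1..m}" for i
  proof -
    have "i \<in> {1..n}" "m+1 \<in> {1..n}" "1 \<in> {1..n}" using that n by auto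
    then have "M0 1 i - M0 1 (m+1) = of_int (xs n m B i)" unfolding M0_def mat_def using za by simp
    then show ?thesis unfolding yI_def by simp
  qed
  have "xI m M0 ` {1..m} = xs n m A ` {1..m}" "yI m M0 ` {1..m} = xs n m B ` {1..m}"
    using xv yv by (auto intro!: image_cong)
  then show "gI m M0 = {A, B}" unfolding gI_def using pa(3) pb(3) by simp
qed

lemma incl_bij:
  assumes m: "m \<ge> 1"
  shows "\<exists>g. bij_betw g {S. incl_sds m S} {M. principal_reversible_square (2 * m + 1) M}"
proof -
  define n where "n = 2*m+1"
  have nm: "n = 2*m+1" "n = 2*m \<or> n = 2*m+1" using n_def by auto
  have b: "bij_betw (gI m) {M. principal_reversible_square n M} {S. incl_sds m S}"
    unfolding bij_betw_def
  proof
    show "inj_on (gI m) {M. principal_reversible_square n M}"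
    proof (rule inj_onI)
      fix M M' assume P: "M \<in> {M. principal_reversible_square n M}" "M' \<in> {M. principal_reversible_square n M}"
        and g: "gI m M = gI m M'"
      have P1: "principal_reversible_square n M" and P2: "principal_reversible_square n M'" using P by auto
      note d = decompI[OF nm(1) m P1] and d' = decompI[OF nm(1) m P2]
      show "M = M'"
      proof (rule inj_core[OF nm(2) m d(5) d'(5) d(1) d(2) d'(1) d'(2) d(3) d(4) d'(3) d'(4)])
        show "M 1 2 = 2" using prs_facts(7)[OF P1] .
        show "M' 1 2 = 2" using prs_facts(7)[OF P2] .
        show "entries n M = real ` {1..n^2}" using prs_facts(3)[OF P1] .
        show "{uminus ` xI m M ` {1..m}, uminus ` yI m M ` {1..m}} = {uminus ` xI m M' ` {1..m}, uminus ` yI m M' ` {1..m}}"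
          using g unfolding gI_def .
      qed
    qed
    show "gI m ` {M. principal_reversible_square n M} = {S. incl_sds m S}"
    proof
      show "gI m ` {M. principal_reversible_square n M} \<subseteq> {S. incl_sds m S}"
        using gI_in[OF nm(1) m] unfolding incl_iff gI_def by blast
      show "{S. incl_sds m S} \<subseteq> gI m ` {M. principal_reversible_square n M}"
      proof
        fix S assume "S \<in> {S. incl_sds m S}"
        then obtain A B where S: "S = {A, B}" "sdsI m A B" unfolding incl_iff by blast
        have S': "sdsI m B A" using sdsI_sym[OF S(2)] .
        note b1 = buildI[OF nm(1) m S(2)] and b2 = buildI[OF nm(1) m S']
        let ?M1 = "mat n ((real (n^2) + 1)/2) 1 (xs n m A) (xs n m B)"
        let ?M2 = "mat n ((real (n^2) + 1)/2) 1 (xs n m B) (xs n m A)"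
        have t: "?M2 1 2 = ?M1 2 1" using mat_transpose by metis
        show "S \<in> gI m ` {M. principal_reversible_square n M}"
        proof (cases "?M1 1 2 = 2")
          case True
          then have "principal_reversible_square n ?M1" using b1 by (intro prs_intro) auto
          then show ?thesis using b1(8) S(1) by blast
        next
          case False
          then have "?M2 1 2 = 2" using b1(7) t by simp
          then have "principal_reversible_square n ?M2" using b2 by (intro prs_intro) auto
          moreover have "gI m ?M2 = S" using b2(8) S(1) by auto
          ultimately show ?thesis by blast
        qed
      qed
    qed
  qed
  show ?thesis using bij_betw_inv_into[OF b] n_def by blast
qed

theorem theorem5:
  fixes m :: nat
  assumes "m \<ge> 1"
  shows "(\<exists>f. bij_betw f {S. non_incl_sds m S} {M. principal_reversible_square (2 * m) M}) \<and>
         (\<exists>g. bij_betw g {S. incl_sds m S} {M. principal_reversible_square (2 * m + 1) M})"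
  using non_incl_bij[OF assms] incl_bij[OF assms] by blast

end
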